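(* Let $\mathcal{P}$ be a poset with at least two elements having the Unique Cover Twin Property, let $n\ge 3$, and let $\mathcal{F}$ be an induced-$\mathcal{P}$-saturated family in $\mathcal{B}_n$. If there exist distinct $x,y\in[n]$ such that no $F\in\mathcal{F}$ satisfies $|F\cap\{x,y\}|=1$, then $\{x,y\}\subseteq F$ for all $F\in\mathcal{F}$.
   Context: In a poset $(P,\le)$, $y$ covers $x$ if $x<y$ and there is no $z$ with $x<z<y$. A poset $\mathcal{P}=(P,\le)$ has the Unique Cover Twin Property (UCTP) if for every $S\in P$ that has exactly one cover $T\in P$, there exists $S'\in P$ with $S'\ne S$ such that $T$ also covers $S'$. $\mathcal{B}_n$ denotes the Boolean lattice $(2^{[n]},\subseteq)$. A family $\mathcal{F}\subseteq 2^{[n]}$ (ordered by inclusion) is induced-$\mathcal{P}$-saturated if it contains no induced copy of $\mathcal{P}$ (an injection $f$ with $u\le v\iff f(u)\subseteq f(v)$) but every family $\mathcal{F}'$ with $\mathcal{F}\subsetneq\mathcal{F}'\subseteq 2^{[n]}$ contains one. *)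

theory Defs
  imports Main
begin

definition is_poset :: "'a set \<Rightarrow> ('a \<Rightarrow> 'a \<Rightarrow> bool) \<Rightarrow> bool" where
  "is_poset P le \<longleftrightarrow>
     (\<forall>x\<in>P. le x x) \<and>
     (\<forall>x\<in>P. \<forall>y\<in>P. le x y \<and> le y x \<longrightarrow> x = y) \<and>
     (\<forall>x\<in>P. \<forall>y\<in>P. \<forall>z\<in>P. le x y \<and> le y z \<longrightarrow> le x z)"

definition covers :: "'a set \<Rightarrow> ('a \<Rightarrow> 'a \<Rightarrow> bool) \<Rightarrow> 'a \<Rightarrow> 'a \<Rightarrow> bool" where
  "covers P le y x \<longleftrightarrow>
     x \<in> P \<and> y \<in> P \<and> le x y \<and> x \<noteq> y \<and>
     \<not> (\<exists>z\<in>P. le x z \<and> z \<noteq> x \<and> le z y \<and> z \<noteq> y)"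

definition UCTP :: "'a set \<Rightarrow> ('a \<Rightarrow> 'a \<Rightarrow> bool) \<Rightarrow> bool" where
  "UCTP P le \<longleftrightarrow>
     (\<forall>S\<in>P. \<forall>T\<in>P. (covers P le T S \<and> (\<forall>T'\<in>P. covers P le T' S \<longrightarrow> T' = T))
        \<longrightarrow> (\<exists>S'\<in>P. S' \<noteq> S \<and> covers P le T S'))"

definition contains_induced_copy ::
  "'a set \<Rightarrow> ('a \<Rightarrow> 'a \<Rightarrow> bool) \<Rightarrow> 'b set set \<Rightarrow> bool" where
  "contains_induced_copy P le Fam \<longleftrightarrow>
     (\<exists>f. inj_on f P \<and> f ` P \<subseteq> Fam \<and>
          (\<forall>u\<in>P. \<forall>v\<in>P. le u v \<longleftrightarrow> f u \<subseteq> f v))"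

definition induced_saturated ::
  "'a set \<Rightarrow> ('a \<Rightarrow> 'a \<Rightarrow> bool) \<Rightarrow> nat \<Rightarrow> nat set set \<Rightarrow> bool" where
  "induced_saturated P le n Fam \<longleftrightarrow>
     Fam \<subseteq> Pow {1..n} \<and>
     \<not> contains_induced_copy P le Fam \<and>
     (\<forall>Fam'. Fam \<subset> Fam' \<and> Fam' \<subseteq> Pow {1..n} \<longrightarrow> contains_induced_copy P le Fam')"

end

theory Submission
  imports Defs
begin

lemma card_cases2:
  assumes "card (F \<inter> {x, y}) \<noteq> 1" "x \<noteq> y"
  shows "(x \<notin> F \<and> y \<notin> F) \<or> (x \<in> F \<and> y \<in> F)"
  using assms by (cases "x \<in> F"; cases "y \<in> F"; auto simp: Int_insert_right)

theorem lemma3p8: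
  fixes P :: "'a set" and le :: "'a \<Rightarrow> 'a \<Rightarrow> bool"
    and n :: nat and Fam :: "nat set set" and x y :: nat
  assumes "is_poset P le" and "finite P" and "card P \<ge> 2"
    and "UCTP P le"
    and "n \<ge> 3"
    and "induced_saturated P le n Fam"
    and "x \<in> {1..n}" and "y \<in> {1..n}" and "x \<noteq> y"
    and "\<forall>F\<in>Fam. card (F \<inter> {x, y}) \<noteq> 1"
  shows "\<forall>F\<in>Fam. {x, y} \<subseteq> F"
proof (rule ccontr)
  assume "\<not> ?thesis"
  then obtain F0 where F0: "F0 \<in> Fam" "\<not> {x,y} \<subseteq> F0" by blast
  have two: "\<And>F. F \<in> Fam \<Longrightarrow> (x \<notin> F \<and> y \<notin> F) \<or> (x \<in> F \<and> y \<in> F)"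
    by (rule card_cases2) (use assms(9,10) in auto)
  have sat: "Fam \<subseteq> Pow {1..n}" "\<not> contains_induced_copy P le Fam"
    "\<And>Fam'. Fam \<subset> Fam' \<Longrightarrow> Fam' \<subseteq> Pow {1..n} \<Longrightarrow> contains_induced_copy P le Fam'"
    using assms(6) unfolding induced_saturated_def by auto
  define Av where "Av = {F\<in>Fam. x \<notin> F \<and> y \<notin> F}"
  have "finite Av" unfolding Av_def
    by (rule finite_subset[of _ "Pow {1..n}"]) (use sat(1) in auto)
  moreover have "F0 \<in> Av" using F0 two unfolding Av_def by blast
  ultimately obtain G where G: "G \<in> Av" and Gmax: "\<And>B. B \<in> Av \<Longrightarrow> G \<subseteq> B \<Longrightarrow> G = B"
    using finite_has_maximal[of Av] by blast
  have GF: "G \<in> Fam" "x \<notin> G" "y \<notin> G" using G unfolding Av_def by auto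
  define N where "N = insert x G"
  have NF: "N \<notin> Fam" using two[of N] N_def assms(9) GF by auto
  have Nsub: "N \<in> Pow {1..n}" using GF sat(1) assms(7) N_def by auto
  have "contains_induced_copy P le (insert N Fam)"
    using sat(3)[of "insert N Fam"] NF Nsub sat(1) by auto
  then obtain f where f: "inj_on f P" "f ` P \<subseteq> insert N Fam"
    "\<forall>u\<in>P. \<forall>v\<in>P. le u v \<longleftrightarrow> f u \<subseteq> f v"
    unfolding contains_induced_copy_def by blast
  have "N \<in> f ` P"
  proof (rule ccontr)
    assume "N \<notin> f ` P"
    hence "f ` P \<subseteq> Fam" using f(2) by auto
    thus False using sat(2) f unfolding contains_induced_copy_def by blast
  qed
  then obtain S where S: "S \<in> P" "f S = N" by blast
  have otherFam: "\<And>Z. Z \<in> P \<Longrightarrow> Z \<noteq> S \<Longrightarrow> f Z \<in> Fam"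
    using f(1,2) S by (metis image_subset_iff inj_on_def insertE)
  have below: "\<And>Z. Z \<in> P \<Longrightarrow> Z \<noteq> S \<Longrightarrow> f Z \<subseteq> N \<longleftrightarrow> f Z \<subseteq> G"
  proof -
    fix Z assume Z: "Z \<in> P" "Z \<noteq> S"
    have "f Z \<subseteq> N \<Longrightarrow> f Z \<subseteq> G"
    proof -
      assume a: "f Z \<subseteq> N"
      have "y \<notin> f Z" using a N_def GF assms(9) by auto
      hence "x \<notin> f Z" using two[OF otherFam[OF Z]] by auto
      thus ?thesis using a N_def by auto
    qed
    thus "f Z \<subseteq> N \<longleftrightarrow> f Z \<subseteq> G" using N_def by auto
  qed
  show False
  proof (cases "G \<in> f ` P")
    case False
    define g where "g = f(S := G)"
    have above: "\<And>Z. Z \<in> P \<Longrightarrow> Z \<noteq> S \<Longrightarrow> N \<subseteq> f Z \<longleftrightarrow> G \<subseteq> f Z"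
    proof -
      fix Z assume Z: "Z \<in> P" "Z \<noteq> S"
      have "G \<subseteq> f Z \<Longrightarrow> N \<subseteq> f Z"
      proof -
        assume a: "G \<subseteq> f Z"
        show ?thesis
        proof (cases "x \<in> f Z")
          case True thus ?thesis using a N_def by auto
        next
          case False
          hence "f Z \<in> Av" using two[OF otherFam[OF Z]] otherFam[OF Z] Av_def by auto
          hence "G = f Z" using Gmax a by blast
          thus ?thesis using \<open>G \<notin> f ` P\<close> Z by auto
        qed
      qed
      thus "N \<subseteq> f Z \<longleftrightarrow> G \<subseteq> f Z" using N_def by auto
    qed
    have "inj_on g P"
    proof (rule inj_onI)
      fix u v assume uv: "u \<in> P" "v \<in> P" "g u = g v"
      show "u = v"
      proof (cases "u = S"; cases "v = S")
        assume "u = S" "v \<noteq> S" thus ?thesis using uv False unfolding g_def by auto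
      next
        assume "u \<noteq> S" "v = S" thus ?thesis using uv False unfolding g_def by auto
      next
        assume "u \<noteq> S" "v \<noteq> S" thus ?thesis using uv f(1) unfolding g_def inj_on_def by auto
      qed simp
    qed
    moreover have "g ` P \<subseteq> Fam"
      using otherFam GF(1) unfolding g_def by auto
    moreover have "\<forall>u\<in>P. \<forall>v\<in>P. le u v \<longleftrightarrow> g u \<subseteq> g v"
    proof (intro ballI)
      fix u v assume uv: "u \<in> P" "v \<in> P"
      show "le u v \<longleftrightarrow> g u \<subseteq> g v"
      proof (cases "u = S")
        case True
        show ?thesis
        proof (cases "v = S")
          case True thus ?thesis using \<open>u = S\<close> f(3) S by auto
        next
          case False
          have "le u v \<longleftrightarrow> N \<subseteq> f v" using f(3) uv S \<open>u = S\<close> by auto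
          also have "\<dots> \<longleftrightarrow> G \<subseteq> f v" using above[OF uv(2) False] .
          finally show ?thesis using \<open>u = S\<close> False unfolding g_def by simp
        qed
      next
        case uF: False
        show ?thesis
        proof (cases "v = S")
          case True
          have "le u v \<longleftrightarrow> f u \<subseteq> N" using f(3) uv S True by auto
          also have "\<dots> \<longleftrightarrow> f u \<subseteq> G" using below[OF uv(1) uF] .
          finally show ?thesis using True uF unfolding g_def by simp
        next
          case False thus ?thesis using uF f(3) uv unfolding g_def by simp
        qed
      qed
    qed
    ultimately show False using sat(2) unfolding contains_induced_copy_def by blast
  next
    case True
    then obtain S0 where S0: "S0 \<in> P" "f S0 = G" by blast
    have S0S: "S0 \<noteq> S" using S0 S N_def GF by auto
    have lt: "le S0 S" using f(3) S S0 N_def by auto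
    have cov: "covers P le S S0"
      unfolding covers_def
    proof (intro conjI)
      show "\<not> (\<exists>z\<in>P. le S0 z \<and> z \<noteq> S0 \<and> le z S \<and> z \<noteq> S)"
      proof
        assume "\<exists>z\<in>P. le S0 z \<and> z \<noteq> S0 \<and> le z S \<and> z \<noteq> S"
        then obtain z where z: "z \<in> P" "le S0 z" "z \<noteq> S0" "le z S" "z \<noteq> S" by blast
        have "f z \<subseteq> G" using below[OF z(1) z(5)] f(3) z S by auto
        moreover have "G \<subseteq> f z" using f(3) z S0 by auto
        ultimately have "f z = f S0" using S0 by auto
        thus False using f(1) z S0 unfolding inj_on_def by blast
      qed
    qed (use S S0 S0S lt in auto)
    have uniq: "\<forall>T'\<in>P. covers P le T' S0 \<longrightarrow> T' = S"
    proof (intro ballI impI)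
      fix T' assume T': "T' \<in> P" "covers P le T' S0"
      show "T' = S"
      proof (rule ccontr)
        assume ne: "T' \<noteq> S"
        have le0: "le S0 T'" "T' \<noteq> S0" using T' unfolding covers_def by auto
        have sub: "G \<subseteq> f T'" using f(3) le0 T' S0 by auto
        have "f T' \<noteq> G" using f(1) T' S0 le0 unfolding inj_on_def by metis
        hence "x \<in> f T'"
        proof -
          assume "f T' \<noteq> G"
          show "x \<in> f T'"
          proof (rule ccontr)
            assume "x \<notin> f T'"
            hence "f T' \<in> Av" using two[OF otherFam[OF T'(1) ne]] otherFam[OF T'(1) ne] Av_def by auto
            thus False using Gmax sub \<open>f T' \<noteq> G\<close> by blast
          qed
        qed
        hence "N \<subseteq> f T'" using sub N_def by auto
        hence "le S T'" using f(3) S T' by auto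
        thus False using T'(2) ne S S0S lt unfolding covers_def by blast
      qed
    qed
    obtain S' where S': "S' \<in> P" "S' \<noteq> S0" "covers P le S S'"
      using assms(4) S0(1) S(1) cov uniq unfolding UCTP_def by blast
    have "le S' S" "S' \<noteq> S" using S' unfolding covers_def by auto
    hence "f S' \<subseteq> G" using below[OF S'(1)] f(3) S S' by auto
    hence "le S' S0" using f(3) S' S0 by auto
    thus False using S'(3) S'(2) S0 S0S lt unfolding covers_def by blast
  qed
qed

end
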